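(* Let $k\subset K$ be a finite field extension such that Waring's problem holds in $k$. Then $k^+\subseteq\overline{N}_{K/k}$.
   Context: $N_{K/k}:K\to k$ is the field norm. $\overline{N}_{K/k}\subseteq k$ denotes the additive closure of the image of the norm, i.e. the set of all finite sums $\sum_i N_{K/k}(a_i)$ with $a_i\in K$ (including $0$). An element $a\in k$ is totally positive if $a>0$ in every ordering of $k$ (if $k$ has no orderings, every element is totally positive); $k^+$ denotes the set of totally positive elements of $k$ together with $0$. Waring's problem holds in $k$ if for every exponent $d\ge1$ there is a finite bound $g(k,d)$ such that every totally positive element of $k$ is a sum of at most $g(k,d)$ $d$-th powers of elements of $k$. *)

theory Defs
  imports Main "HOL-Combinatorics.Permutations"
begin

text \<open>The big field K is the type 'a; the base field k is a subfield k of it.\<close>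

definition subfield :: "'a::field set \<Rightarrow> bool" where
  "subfield k \<longleftrightarrow> 0 \<in> k \<and> 1 \<in> k \<and> (\<forall>x\<in>k. \<forall>y\<in>k. x + y \<in> k \<and> x * y \<in> k)
     \<and> (\<forall>x\<in>k. - x \<in> k) \<and> (\<forall>x\<in>k. x \<noteq> 0 \<longrightarrow> inverse x \<in> k)"

definition lin_indep_over :: "'a::field set \<Rightarrow> 'a list \<Rightarrow> bool" where
  "lin_indep_over k bs \<longleftrightarrow> (\<forall>c. (\<forall>i<length bs. c i \<in> k) \<and> (\<Sum>i<length bs. c i * bs ! i) = 0
      \<longrightarrow> (\<forall>i<length bs. c i = 0))"

definition spans_over :: "'a::field set \<Rightarrow> 'a list \<Rightarrow> bool" where
  "spans_over k bs \<longleftrightarrow> (\<forall>x. \<exists>c. (\<forall>i<length bs. c i \<in> k) \<and> x = (\<Sum>i<length bs. c i * bs ! i))"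

definition basis_over :: "'a::field set \<Rightarrow> 'a list \<Rightarrow> bool" where
  "basis_over k bs \<longleftrightarrow> lin_indep_over k bs \<and> spans_over k bs"

definition finite_extension :: "'a::field set \<Rightarrow> bool" where
  "finite_extension k \<longleftrightarrow> subfield k \<and> (\<exists>bs. basis_over k bs)"

definition coords :: "'a::field set \<Rightarrow> 'a list \<Rightarrow> 'a \<Rightarrow> nat \<Rightarrow> 'a" where
  "coords k bs x = (SOME c. (\<forall>i<length bs. c i \<in> k) \<and> x = (\<Sum>i<length bs. c i * bs ! i))"

text \<open>Field norm N_{K/k}(x): determinant (Leibniz formula) of the matrix of the k-linear
  map y \<mapsto> x*y with respect to a (chosen) k-basis of K.\<close>
definition field_norm :: "'a::field set \<Rightarrow> 'a \<Rightarrow> 'a" where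
  "field_norm k x = (let bs = (SOME bs. basis_over k bs); n = length bs;
       M = (\<lambda>i j. coords k bs (x * bs ! j) i)
     in \<Sum>p\<in>{p. p permutes {..<n}}. of_int (sign p) * (\<Prod>i<n. M i (p i)))"

definition norm_closure :: "'a::field set \<Rightarrow> 'a set" where
  "norm_closure k = {sum_list (map (field_norm k) xs) | xs. True}"

text \<open>An ordering of the field k, given by its positive cone P (the elements \<ge> 0).\<close>
definition field_ordering :: "'a::field set \<Rightarrow> 'a set \<Rightarrow> bool" where
  "field_ordering k P \<longleftrightarrow> P \<subseteq> k \<and> (\<forall>x\<in>P. \<forall>y\<in>P. x + y \<in> P \<and> x * y \<in> P)
     \<and> (\<forall>x\<in>k. x \<in> P \<or> - x \<in> P) \<and> (\<forall>x. x \<in> P \<and> - x \<in> P \<longrightarrow> x = 0)"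

definition totally_positive :: "'a::field set \<Rightarrow> 'a \<Rightarrow> bool" where
  "totally_positive k a \<longleftrightarrow> a \<in> k \<and> (\<forall>P. field_ordering k P \<longrightarrow> a \<in> P \<and> a \<noteq> 0)"

definition tot_pos_set :: "'a::field set \<Rightarrow> 'a set" where
  "tot_pos_set k = {a. totally_positive k a} \<union> {0}"

definition waring_holds :: "'a::field set \<Rightarrow> bool" where
  "waring_holds k \<longleftrightarrow> (\<forall>d::nat. d \<ge> 1 \<longrightarrow> (\<exists>g::nat. \<forall>a. totally_positive k a \<longrightarrow>
      (\<exists>xs. length xs \<le> g \<and> set xs \<subseteq> k \<and> a = sum_list (map (\<lambda>x. x ^ d) xs))))"

end

theory Submission
  imports Defs
begin

lemma coords_unique:
  assumes sf: "subfield k" and b: "basis_over k bs"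
    and c: "\<forall>i<length bs. c i \<in> k" and x: "x = (\<Sum>i<length bs. c i * bs ! i)"
    and i: "i < length bs"
  shows "coords k bs x i = c i"
proof -
  let ?P = "\<lambda>c. (\<forall>i<length bs. c i \<in> k) \<and> x = (\<Sum>i<length bs. c i * bs ! i)"
  have "?P (coords k bs x)" unfolding coords_def by (rule someI[of ?P c]) (use c x in auto)
  then have c2: "\<forall>i<length bs. coords k bs x i \<in> k" and x2: "x = (\<Sum>i<length bs. coords k bs x i * bs ! i)" by auto
  define d where "d = (\<lambda>i. coords k bs x i + - c i)"
  have dk: "\<forall>i<length bs. d i \<in> k" using c c2 sf unfolding d_def subfield_def by (simp del: add_uminus_conv_diff)
  have "(\<Sum>i<length bs. d i * bs ! i) = (\<Sum>i<length bs. coords k bs x i * bs ! i) - (\<Sum>i<length bs. c i * bs ! i)"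
    unfolding d_def by (simp add: algebra_simps sum_subtractf)
  also have "\<dots> = 0" using x x2 by simp
  finally have "\<forall>i<length bs. d i = 0" using b dk unfolding basis_over_def lin_indep_over_def by blast
  then show ?thesis using i unfolding d_def by (simp add: add_eq_0_iff2)
qed

lemma norm_of_base:
  assumes fe: "finite_extension k" and xk: "x \<in> k"
  shows "field_norm k x = x ^ length (SOME bs. basis_over k bs)"
proof -
  define bs where "bs = (SOME bs. basis_over k bs)"
  define n where "n = length bs"
  have sf: "subfield k" using fe unfolding finite_extension_def by auto
  have b: "basis_over k bs" unfolding bs_def using fe unfolding finite_extension_def by (metis someI_ex)
  define M where "M = (\<lambda>i j. coords k bs (x * bs ! j) i)"
  have M: "M i j = (if i = j then x else 0)" if "i < n" "j < n" for i j
  proof -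
    let ?c = "\<lambda>i. if i = j then x else 0"
    have e: "(\<lambda>i. ?c i * bs ! i) = (\<lambda>i. if i = j then x * bs ! j else 0)" by auto
    have "(\<Sum>i<n. ?c i * bs ! i) = x * bs ! j" unfolding e using that(2) by simp
    then show ?thesis unfolding M_def
      using coords_unique[OF sf b, of ?c "x * bs ! j" i] that xk sf
      unfolding n_def subfield_def by auto
  qed
  have fn: "field_norm k x = (\<Sum>p\<in>{p. p permutes {..<n}}. of_int (sign p) * (\<Prod>i<n. M i (p i)))"
    unfolding field_norm_def Let_def bs_def[symmetric] n_def[symmetric] M_def by simp
  have fin: "finite {p. p permutes {..<n}}" by (simp add: finite_permutations)
  have idin: "id \<in> {p. p permutes {..<n}}" by (simp add: permutes_id)
  have zero: "of_int (sign p) * (\<Prod>i<n. M i (p i)) = 0"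
    if "p \<in> {p. p permutes {..<n}} - {id}" for p
  proof -
    from that have pp: "p permutes {..<n}" and "p \<noteq> id" by auto
    then obtain i where "p i \<noteq> i" by (metis eq_id_iff)
    then have i: "i < n" using pp by (meson lessThan_iff permutes_not_in)
    then have "p i < n" using pp by (meson lessThan_iff permutes_in_image)
    then have "M i (p i) = 0" using M i \<open>p i \<noteq> i\<close> by auto
    then have "(\<Prod>i<n. M i (p i)) = 0" using i by (meson finite_lessThan lessThan_iff prod_zero)
    then show ?thesis by simp
  qed
  have "field_norm k x = of_int (sign (id::nat\<Rightarrow>nat)) * (\<Prod>i<n. M i (id i))"
  proof -
    have "(\<Sum>p\<in>{p. p permutes {..<n}} - {id}. of_int (sign p) * (\<Prod>i<n. M i (p i))) = 0"
      using zero by (intro sum.neutral) blast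
    then show ?thesis unfolding fn using sum.remove[OF fin idin, of "\<lambda>p. of_int (sign p) * (\<Prod>i<n. M i (p i))"]
      by simp
  qed
  also have "\<dots> = (\<Prod>i<n. x)" by (simp add: sign_id M)
  finally show ?thesis by (simp add: n_def bs_def)
qed

theorem mainTheorem6:
  fixes k :: "'a::field set"
  assumes "finite_extension k"
    and "waring_holds k"
  shows "tot_pos_set k \<subseteq> norm_closure k"
proof
  fix a assume a: "a \<in> tot_pos_set k"
  define n where "n = length (SOME bs. basis_over k bs)"
  have b: "basis_over k (SOME bs. basis_over k bs)" using assms(1) unfolding finite_extension_def by (metis someI_ex)
  have n1: "n \<ge> 1"
  proof (rule ccontr)
    assume "\<not> n \<ge> 1"
    then have "n = 0" by simp
    then have "(1::'a) = 0" using b unfolding n_def basis_over_def spans_over_def by auto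
    then show False by simp
  qed
  show "a \<in> norm_closure k"
  proof (cases "a = 0")
    case True
    then show ?thesis unfolding norm_closure_def by (auto intro: exI[of _ "[]"])
  next
    case False
    then have tp: "totally_positive k a" using a unfolding tot_pos_set_def by auto
    obtain g where g: "\<forall>a. totally_positive k a \<longrightarrow>
      (\<exists>xs. length xs \<le> g \<and> set xs \<subseteq> k \<and> a = sum_list (map (\<lambda>x. x ^ n) xs))"
      using assms(2) n1 unfolding waring_holds_def by blast
    then obtain xs where xs: "set xs \<subseteq> k" "a = sum_list (map (\<lambda>x. x ^ n) xs)" using tp by blast
    have me: "map (\<lambda>x. x ^ n) xs = map (field_norm k) xs"
      using xs(1) norm_of_base[OF assms(1)] unfolding n_def by (auto intro!: map_cong)
    have "a = sum_list (map (field_norm k) xs)" using xs(2) unfolding me .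
    then show ?thesis unfolding norm_closure_def by blast
  qed
qed

end
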